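(* Let $f(x|\eta)$, $\eta=(\theta,v,m)$, be the skew-normal kernel and let $\eta_1,\dots,\eta_{k_0}$ be distinct parameters with $v_j=\sigma_j^2>0$. The $4k_0$ functions $$\Big\{f(\cdot|\eta_j),\ \frac{\partial f}{\partial\theta}(\cdot|\eta_j),\ \frac{\partial f}{\partial v}(\cdot|\eta_j),\ \frac{\partial f}{\partial m}(\cdot|\eta_j):\ j=1,\dots,k_0\Big\}$$ are linearly dependent (as functions of $x\in\mathbb{R}$, almost everywhere) if and only if $P_1(\eta_1,\dots,\eta_{k_0})=0$ or $P_2(\eta_1,\dots,\eta_{k_0})=0$, where $$P_1=\prod_{j=1}^{k_0}m_j,\qquad P_2=\prod_{1\le i\neq j\le k_0}\Big\{(\theta_i-\theta_j)^2+\big[\sigma_i^2(1+m_j^2)-\sigma_j^2(1+m_i^2)\big]^2\Big\}.$$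
   Context: Skew-normal kernel: $f(x|\theta,v,m)=\frac{2}{\sigma}\varphi\!\left(\frac{x-\theta}{\sigma}\right)\Phi\!\left(\frac{m(x-\theta)}{\sigma}\right)$ with $\sigma=\sqrt v$, $\varphi,\Phi$ the standard normal density and cdf. An empty product equals $1$. *)

theory Defs
  imports "HOL-Probability.Probability"
begin

definition std_normal_cdf :: "real \<Rightarrow> real" where
  "std_normal_cdf z = (LBINT t:{..z}. std_normal_density t)"

definition skew_normal :: "real \<Rightarrow> real \<Rightarrow> real \<Rightarrow> real \<Rightarrow> real" where
  "skew_normal x \<theta> v m =
     2 / sqrt v * std_normal_density ((x - \<theta>) / sqrt v) * std_normal_cdf (m * (x - \<theta>) / sqrt v)"

definition dsn_theta :: "real \<Rightarrow> real \<Rightarrow> real \<Rightarrow> real \<Rightarrow> real" where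
  "dsn_theta x \<theta> v m = deriv (\<lambda>t. skew_normal x t v m) \<theta>"

definition dsn_v :: "real \<Rightarrow> real \<Rightarrow> real \<Rightarrow> real \<Rightarrow> real" where
  "dsn_v x \<theta> v m = deriv (\<lambda>w. skew_normal x \<theta> w m) v"

definition dsn_m :: "real \<Rightarrow> real \<Rightarrow> real \<Rightarrow> real \<Rightarrow> real" where
  "dsn_m x \<theta> v m = deriv (\<lambda>n. skew_normal x \<theta> v n) m"

end

theory Submission
  imports Defs "HOL-Real_Asymp.Real_Asymp"
begin


lemma phi_int: "integrable lborel std_normal_density"
  using integrable_std_normal_moment[of 0] by simp

lemma phi_setint: "A \<in> sets lborel \<Longrightarrow> set_integrable lborel A std_normal_density"
  unfolding set_integrable_def by (intro integrable_mult_indicator phi_int) auto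

lemma phi_cont: "continuous_on S std_normal_density"
  unfolding std_normal_density_def by (intro continuous_intros) auto

lemma Phi_split: "std_normal_cdf z = std_normal_cdf 0 + (LBINT y=0..z. std_normal_density y)"
proof (cases "0 \<le> z")
  case True
  have e: "{..z} = {..0} \<union> {0<..z}" using True by auto
  have "(LBINT t:{..0} \<union> {0<..z}. std_normal_density t) = (LBINT t:{..0}. std_normal_density t) + (LBINT t:{0<..z}. std_normal_density t)"
    by (rule set_integral_Un) (auto intro!: phi_setint)
  hence "std_normal_cdf z = (LBINT t:{..0}. std_normal_density t) + (LBINT t:{0<..z}. std_normal_density t)"
    unfolding std_normal_cdf_def e .
  thus ?thesis using True by (simp add: interval_integral_Ioc[of 0, simplified zero_ereal_def[symmetric]] std_normal_cdf_def)
next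
  case False
  have e: "{..0} = {..z} \<union> {z<..0::real}" using False by auto
  have "(LBINT t:{..z} \<union> {z<..0}. std_normal_density t) = (LBINT t:{..z}. std_normal_density t) + (LBINT t:{z<..0}. std_normal_density t)"
    by (rule set_integral_Un) (auto intro!: phi_setint)
  hence "std_normal_cdf 0 = std_normal_cdf z + (LBINT t:{z<..0}. std_normal_density t)"
    unfolding std_normal_cdf_def e .
  moreover have "(LBINT y=0..z. std_normal_density y) = - (LBINT t:{z<..0}. std_normal_density t)"
    using False by (subst interval_integral_endpoints_reverse) (simp add: interval_integral_Ioc[of _ 0, simplified zero_ereal_def[symmetric]])
  ultimately show ?thesis by simp
qed

lemma Phi_deriv: "(std_normal_cdf has_real_derivative std_normal_density x) (at x)"
proof -
  let ?F = "\<lambda>u. LBINT y=0..u. std_normal_density y"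
  define d e where "d = min 0 x - 1" and "e = max 0 x + 1"
  have "(?F has_vector_derivative std_normal_density x) (at x within {d..e})"
    using interval_integral_FTC2[of d 0 e std_normal_density x] by (auto simp: d_def e_def phi_cont zero_ereal_def)
  hence "(?F has_vector_derivative std_normal_density x) (at x within {d<..<e})"
    by (rule has_vector_derivative_within_subset) auto
  hence "(?F has_vector_derivative std_normal_density x) (at x)"
    by (subst (asm) has_vector_derivative_within_open) (auto simp: d_def e_def)
  hence "(?F has_real_derivative std_normal_density x) (at x)"
    by (simp add: has_real_derivative_iff_has_vector_derivative)
  hence "((\<lambda>u. std_normal_cdf 0 + ?F u) has_real_derivative std_normal_density x) (at x)"
    by (auto intro!: derivative_eq_intros)
  thus ?thesis by (subst (asm) Phi_split[symmetric])
qed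

lemma Phi_cont: "continuous_on S std_normal_cdf"
  by (meson DERIV_isCont Phi_deriv continuous_at_imp_continuous_on)

lemma Phi_top: "(std_normal_cdf \<longlongrightarrow> std_normal_cdf 0 + (LBINT t:{0..}. std_normal_density t)) at_top"
proof -
  have "((\<lambda>b. std_normal_cdf 0 + (LBINT t:{0..b}. std_normal_density t)) \<longlongrightarrow> std_normal_cdf 0 + (LBINT t:{0..}. std_normal_density t)) at_top"
    by (intro tendsto_intros tendsto_set_lebesgue_integral_at_top phi_setint) auto
  moreover have "eventually (\<lambda>b. std_normal_cdf 0 + (LBINT t:{0..b}. std_normal_density t) = std_normal_cdf b) at_top"
    using eventually_ge_at_top[of 0]
    by eventually_elim (subst Phi_split, simp add: interval_integral_Icc[of 0, simplified zero_ereal_def[symmetric]])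
  ultimately show ?thesis by (rule Lim_transform_eventually)
qed

lemma Phi_bot: "(std_normal_cdf \<longlongrightarrow> 0) at_bot"
proof -
  have "((\<lambda>a. std_normal_cdf 0 - (LBINT t:{a..0}. std_normal_density t)) \<longlongrightarrow> std_normal_cdf 0 - (LBINT t:{..0}. std_normal_density t)) at_bot"
    by (intro tendsto_intros tendsto_set_lebesgue_integral_at_bot phi_setint) auto
  moreover have "eventually (\<lambda>a. std_normal_cdf 0 - (LBINT t:{a..0}. std_normal_density t) = std_normal_cdf a) at_bot"
    using eventually_le_at_bot[of 0]
    apply eventually_elim
    apply (subst (2) Phi_split)
    apply (subst interval_integral_endpoints_reverse)
    apply (simp add: interval_integral_Icc[of _ 0, simplified zero_ereal_def[symmetric]])
    done
  ultimately show ?thesis by (simp add: std_normal_cdf_def Lim_transform_eventually)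
qed



lemma phi_deriv: "(std_normal_density has_real_derivative (- y * std_normal_density y)) (at y)"
  unfolding std_normal_density_def
  by (auto intro!: derivative_eq_intros simp: power2_eq_square field_simps)

lemma phi_pos: "std_normal_density y > 0"
  unfolding std_normal_density_def by simp

lemma mills_upper:
  assumes g: "\<And>y. y > 0 \<Longrightarrow> (g has_real_derivative - std_normal_density y) (at y)"
    and lim: "(g \<longlongrightarrow> 0) at_top" and y: "y > 0"
  shows "g y \<le> std_normal_density y * (1/y - 1/y^3 + 3/y^5)"
proof -
  define h where "h t = std_normal_density t * (1/t - 1/t^3 + 3/t^5) - g t" for t
  have hd: "(h has_real_derivative (- 15 * std_normal_density t / t^6)) (at t)" if "t > 0" for t
  proof -
    have "(h has_real_derivative ((- t * std_normal_density t) * (1/t - 1/t^3 + 3/t^5)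
           + std_normal_density t * (- 1/t^2 + 3/t^4 - 15/t^6) - (- std_normal_density t))) (at t)"
      unfolding h_def using that
      by (auto intro!: derivative_eq_intros phi_deriv g simp: field_simps power2_eq_square power3_eq_cube
           eval_nat_numeral)
    moreover have "(- t * std_normal_density t) * (1/t - 1/t^3 + 3/t^5)
           + std_normal_density t * (- 1/t^2 + 3/t^4 - 15/t^6) - (- std_normal_density t)
          = - 15 * std_normal_density t / t^6"
      using that by (simp add: field_simps eval_nat_numeral)
    ultimately show ?thesis by simp
  qed
  have hlim: "(h \<longlongrightarrow> 0) at_top"
  proof -
    have "((\<lambda>t. std_normal_density t * (1/t - 1/t^3 + 3/t^5)) \<longlongrightarrow> 0) at_top"
      unfolding std_normal_density_def by real_asymp
    thus ?thesis unfolding h_def using tendsto_diff[OF _ lim] by fastforce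
  qed
  have "eventually (\<lambda>t. h t \<le> h y) at_top"
    using eventually_ge_at_top[of y]
  proof eventually_elim
    case (elim t)
    show ?case
    proof (rule DERIV_nonpos_imp_nonincreasing[OF elim])
      fix x assume "y \<le> x" "x \<le> t"
      hence "x > 0" using y by linarith
      thus "\<exists>D. (h has_real_derivative D) (at x) \<and> D \<le> 0"
        using hd[of x] phi_pos[of x] by (intro exI[of _ "- 15 * std_normal_density x / x^6"]) auto
    qed
  qed
  hence "0 \<le> h y" by (rule tendsto_upperbound[OF hlim]) simp
  thus ?thesis unfolding h_def by simp
qed

lemma mills_lower:
  assumes g: "\<And>y. y > 0 \<Longrightarrow> (g has_real_derivative - std_normal_density y) (at y)"
    and lim: "(g \<longlongrightarrow> 0) at_top" and y: "y > 0"
  shows "std_normal_density y * (1/y - 1/y^3 + 3/y^5 - 15/y^7) \<le> g y"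
proof -
  define h where "h t = std_normal_density t * (1/t - 1/t^3 + 3/t^5 - 15/t^7) - g t" for t
  have hd: "(h has_real_derivative (105 * std_normal_density t / t^8)) (at t)" if "t > 0" for t
  proof -
    have "(h has_real_derivative ((- t * std_normal_density t) * (1/t - 1/t^3 + 3/t^5 - 15/t^7)
           + std_normal_density t * (- 1/t^2 + 3/t^4 - 15/t^6 + 105/t^8) - (- std_normal_density t))) (at t)"
      unfolding h_def using that
      by (auto intro!: derivative_eq_intros phi_deriv g simp: field_simps power2_eq_square power3_eq_cube
           eval_nat_numeral)
    moreover have "(- t * std_normal_density t) * (1/t - 1/t^3 + 3/t^5 - 15/t^7)
           + std_normal_density t * (- 1/t^2 + 3/t^4 - 15/t^6 + 105/t^8) - (- std_normal_density t)
          = 105 * std_normal_density t / t^8"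
      using that by (simp add: field_simps eval_nat_numeral)
    ultimately show ?thesis by simp
  qed
  have hlim: "(h \<longlongrightarrow> 0) at_top"
  proof -
    have "((\<lambda>t. std_normal_density t * (1/t - 1/t^3 + 3/t^5 - 15/t^7)) \<longlongrightarrow> 0) at_top"
      unfolding std_normal_density_def by real_asymp
    thus ?thesis unfolding h_def using tendsto_diff[OF _ lim] by fastforce
  qed
  have "eventually (\<lambda>t. h y \<le> h t) at_top"
    using eventually_ge_at_top[of y]
  proof eventually_elim
    case (elim t)
    show ?case
    proof (rule DERIV_nonneg_imp_nondecreasing[OF elim])
      fix x assume "y \<le> x" "x \<le> t"
      hence "x > 0" using y by linarith
      thus "\<exists>D. (h has_real_derivative D) (at x) \<and> D \<ge> 0"
        using hd[of x] phi_pos[of x] by (intro exI[of _ "105 * std_normal_density x / x^8"]) auto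
    qed
  qed
  hence "h y \<le> 0" by (rule tendsto_lowerbound[OF hlim]) simp
  thus ?thesis unfolding h_def by simp
qed



lemma quad_zero:
  fixes f :: "'a \<Rightarrow> real"
  assumes f: "filterlim f at_top F" and F: "F \<noteq> bot"
    and lim: "((\<lambda>x. a * (f x)^2 + b * f x + c) \<longlongrightarrow> 0) F"
  shows "a = 0 \<and> b = 0 \<and> c = 0"
proof -
  have i1: "((\<lambda>x. 1 / f x) \<longlongrightarrow> 0) F"
    using tendsto_inverse_0_at_top[OF f] by (simp add: divide_inverse)
  have ev: "eventually (\<lambda>x. f x > 0) F" using f by (simp add: filterlim_at_top_dense)
  have t1: "((\<lambda>x. (a * (f x)^2 + b * f x + c) * ((1 / f x) * (1 / f x))) \<longlongrightarrow> 0 * (0 * 0)) F"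
    by (intro tendsto_mult lim i1)
  have t2: "((\<lambda>x. a + b * (1 / f x) + c * ((1 / f x) * (1 / f x))) \<longlongrightarrow> a + b * 0 + c * (0 * 0)) F"
    by (intro tendsto_add tendsto_mult tendsto_const i1)
  have e1: "eventually (\<lambda>x. (a * (f x)^2 + b * f x + c) * ((1 / f x) * (1 / f x)) =
      a + b * (1 / f x) + c * ((1 / f x) * (1 / f x))) F"
    using ev by eventually_elim (simp add: field_simps power2_eq_square)
  have "a + b * 0 + c * (0 * 0) = 0 * (0 * 0)"
    using tendsto_unique[OF F t2 Lim_transform_eventually[OF t1 e1]] .
  hence a: "a = 0" by simp
  have t3: "((\<lambda>x. (a * (f x)^2 + b * f x + c) * (1 / f x)) \<longlongrightarrow> 0 * 0) F"
    by (intro tendsto_mult lim i1)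
  have t4: "((\<lambda>x. b + c * (1 / f x)) \<longlongrightarrow> b + c * 0) F"
    by (intro tendsto_add tendsto_mult tendsto_const i1)
  have e2: "eventually (\<lambda>x. (a * (f x)^2 + b * f x + c) * (1 / f x) = b + c * (1 / f x)) F"
    using ev by eventually_elim (simp add: field_simps a)
  have "b + c * 0 = 0 * 0"
    using tendsto_unique[OF F t4 Lim_transform_eventually[OF t3 e2]] .
  hence b: "b = 0" by simp
  have "((\<lambda>x. c) \<longlongrightarrow> 0) F" using lim by (simp add: a b)
  hence "c = 0" using tendsto_unique[OF F] tendsto_const by blast
  thus ?thesis using a b by simp
qed

definition p5 :: "real \<Rightarrow> real" where "p5 y = 1/y - 1/y^3 + 3/y^5"

lemma alg_t1: "(y::real) > 0 \<Longrightarrow> (q2 * y^2 + q1 * y + q0) * (1/y - 1/y^3 + 3/y^5) = q2 * y + q1 + ((q0-q2)/y - q1/y^2 + (3*q2-q0)/y^3 + 3*q1/y^4 + 3*q0/y^5)"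
  by (simp add: field_simps) (simp add: algebra_simps power_def)

lemma alg_t2: "(Y::real) > 0 \<Longrightarrow> Y^3 * ((q0-q2)/Y - q1/Y^2 + (3*q2-q0)/Y^3 + 3*q1/Y^4 + 3*q0/Y^5 + W) =
   (q0 - q2) * Y^2 + (- q1) * Y + (3*q2 - q0) + (3*q1 * (1 / Y) + 3*q0 * (1/ Y^2) + Y^3 * W)"
  by (simp add: field_simps) (simp add: algebra_simps power_def)

lemma top_lemma:
  fixes \<rho> r :: "real \<Rightarrow> real"
  assumes al: "\<alpha> > 0"
    and mills: "\<And>y. y > 0 \<Longrightarrow> \<bar>\<rho> y - p5 y\<bar> \<le> 15 / y^7"
    and eq: "eventually (\<lambda>x. c2 * x^2 + c1 * x + c0
         + (q2 * (\<alpha> * (x - \<theta>))^2 + q1 * (\<alpha> * (x - \<theta>)) + q0) * \<rho> (\<alpha> * (x - \<theta>)) + r x = 0) at_top"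
    and rlim: "((\<lambda>x. x^3 * r x) \<longlongrightarrow> 0) at_top"
  shows "c2 = 0 \<and> c1 = 0 \<and> c0 = 0 \<and> q2 = 0 \<and> q1 = 0 \<and> q0 = 0"
proof -
  define Y where "Y x = \<alpha> * (x - \<theta>)" for x
  have Y: "filterlim Y at_top at_top" unfolding Y_def using al by real_asymp
  define Q where "Q y = q2 * y^2 + q1 * y + q0" for y
  define \<epsilon> where "\<epsilon> y = \<rho> y - p5 y" for y
  define E where "E y = (q0-q2)/y - q1/y^2 + (3*q2-q0)/y^3 + 3*q1/y^4 + 3*q0/y^5 + Q y * \<epsilon> y" for y
  have QE: "Q y * \<rho> y = q2 * y + q1 + E y" if "y > 0" for y
  proof -
    have "Q y * \<rho> y = Q y * p5 y + Q y * \<epsilon> y" by (simp add: \<epsilon>_def algebra_simps)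
    thus ?thesis using alg_t1[OF that, of q2 q1 q0] unfolding Q_def E_def p5_def by simp
  qed
  have Qe: "((\<lambda>y. y^3 * (Q y * \<epsilon> y)) \<longlongrightarrow> 0) at_top"
  proof (rule Lim_null_comparison)
    show "eventually (\<lambda>y. norm (y^3 * (Q y * \<epsilon> y)) \<le> 15 * (\<bar>q2\<bar> * (1/y^2) + \<bar>q1\<bar> * (1/y^3) + \<bar>q0\<bar> * (1/y^4))) at_top"
      using eventually_gt_at_top[of 0]
    proof eventually_elim
      case (elim y)
      define B where "B = \<bar>q2\<bar> * y^2 + \<bar>q1\<bar> * y + \<bar>q0\<bar>"
      have QB: "\<bar>Q y\<bar> \<le> B" unfolding Q_def B_def
        using abs_triangle_ineq[of "q2*y^2+q1*y" q0] abs_triangle_ineq[of "q2*y^2" "q1*y"] elim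
        by (simp add: abs_mult)
      have eB: "\<bar>\<epsilon> y\<bar> \<le> 15 / y^7" using mills[OF elim] by (simp add: \<epsilon>_def)
      have B0: "0 \<le> B" unfolding B_def using elim by simp
      have "\<bar>Q y\<bar> * \<bar>\<epsilon> y\<bar> \<le> B * (15 / y^7)"
        by (rule mult_mono[OF QB eB B0 abs_ge_zero])
      hence "y^3 * (\<bar>Q y\<bar> * \<bar>\<epsilon> y\<bar>) \<le> y^3 * (B * (15 / y^7))"
        by (rule mult_left_mono) (use elim in simp)
      also have "y^3 * (B * (15 / y^7)) = 15 * (\<bar>q2\<bar> * (1/y^2) + \<bar>q1\<bar> * (1/y^3) + \<bar>q0\<bar> * (1/y^4))"
        unfolding B_def using elim by (simp add: field_simps) (simp add: algebra_simps power_def)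
      finally have "y^3 * (\<bar>Q y\<bar> * \<bar>\<epsilon> y\<bar>) \<le> 15 * (\<bar>q2\<bar> * (1/y^2) + \<bar>q1\<bar> * (1/y^3) + \<bar>q0\<bar> * (1/y^4))" .
      moreover have "norm (y^3 * (Q y * \<epsilon> y)) = y^3 * (\<bar>Q y\<bar> * \<bar>\<epsilon> y\<bar>)"
        using elim by (simp add: abs_mult)
      ultimately show ?case by simp
    qed
    have l: "((\<lambda>y::real. 1/y^n) \<longlongrightarrow> 0) at_top" if "n > 0" for n :: nat
      using that by real_asymp
    show "((\<lambda>y. 15 * (\<bar>q2\<bar> * (1/y^2) + \<bar>q1\<bar> * (1/y^3) + \<bar>q0\<bar> * (1/y^4))) \<longlongrightarrow> 0) at_top"
      using tendsto_mult_left[OF tendsto_add[OF tendsto_add[OF tendsto_mult_left[OF l[of 2]] tendsto_mult_left[OF l[of 3]]] tendsto_mult_left[OF l[of 4]]], of 15 "\<bar>q2\<bar>" "\<bar>q1\<bar>" "\<bar>q0\<bar>"]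
      by simp
  qed
  have l: "((\<lambda>y::real. 1/y^n) \<longlongrightarrow> 0) at_top" if "n > 0" for n :: nat
    using that by real_asymp
  have Qe0: "((\<lambda>y. Q y * \<epsilon> y) \<longlongrightarrow> 0) at_top"
  proof -
    have "((\<lambda>y. (1/y^3) * (y^3 * (Q y * \<epsilon> y))) \<longlongrightarrow> 0 * 0) at_top"
      by (intro tendsto_mult l Qe) auto
    moreover have "eventually (\<lambda>y. (1/y^3) * (y^3 * (Q y * \<epsilon> y)) = Q y * \<epsilon> y) at_top"
      using eventually_gt_at_top[of 0] by eventually_elim simp
    ultimately show ?thesis using Lim_transform_eventually by fastforce
  qed
  have Elim: "(E \<longlongrightarrow> 0) at_top"
  proof -
    have "((\<lambda>y. (q0-q2) * (1/y^1) - q1 * (1/y^2) + (3*q2-q0) * (1/y^3) + 3*q1 * (1/y^4) + 3*q0 * (1/y^5) + Q y * \<epsilon> y)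
       \<longlongrightarrow> (q0-q2) * 0 - q1 * 0 + (3*q2-q0) * 0 + 3*q1 * 0 + 3*q0 * 0 + 0) at_top"
      by (intro tendsto_intros l Qe0) auto
    thus ?thesis unfolding E_def by simp
  qed
  have r0: "(r \<longlongrightarrow> 0) at_top"
  proof -
    have "((\<lambda>x. (1/x^3) * (x^3 * r x)) \<longlongrightarrow> 0 * 0) at_top"
      by (intro tendsto_mult l rlim) auto
    moreover have "eventually (\<lambda>x. (1/x^3) * (x^3 * r x) = r x) at_top"
      using eventually_gt_at_top[of 0] by eventually_elim simp
    ultimately show ?thesis using Lim_transform_eventually by fastforce
  qed
  have eq2: "eventually (\<lambda>x. c2 * x^2 + (c1 + q2 * \<alpha>) * x + (c0 - q2 * \<alpha> * \<theta> + q1) = - (E (Y x) + r x)) at_top"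
    using eq eventually_gt_at_top[of "\<theta>"]
  proof eventually_elim
    case (elim x)
    have "Y x > 0" using elim al unfolding Y_def by simp
    from QE[OF this] elim(1) show ?case unfolding Y_def Q_def by (simp add: algebra_simps)
  qed
  have "((\<lambda>x. - (E (Y x) + r x)) \<longlongrightarrow> - (0 + 0)) at_top"
    by (intro tendsto_intros filterlim_compose[OF Elim Y] r0)
  moreover have "eventually (\<lambda>x. - (E (Y x) + r x) = c2 * (id x)^2 + (c1 + q2 * \<alpha>) * id x + (c0 - q2 * \<alpha> * \<theta> + q1)) at_top"
    by (rule eventually_mono[OF eq2]) simp
  ultimately have "((\<lambda>x. c2 * (id x)^2 + (c1 + q2 * \<alpha>) * id x + (c0 - q2 * \<alpha> * \<theta> + q1)) \<longlongrightarrow> 0) at_top"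
    using Lim_transform_eventually by fastforce
  moreover have fid: "filterlim (id::real\<Rightarrow>real) at_top at_top" by (simp add: id_def filterlim_ident)
  ultimately have c: "c2 = 0" "c1 + q2 * \<alpha> = 0" "c0 - q2 * \<alpha> * \<theta> + q1 = 0"
    using quad_zero[OF fid _ ] by auto
  hence c: "c2 = 0" "c1 = - q2 * \<alpha>" "c0 = q2 * \<alpha> * \<theta> - q1"
    by auto
  have eq3: "eventually (\<lambda>x. (q0 - q2) * (Y x)^2 + (- q1) * Y x + (3*q2 - q0)
       = - (3*q1 * (1 / Y x) + 3*q0 * (1/ (Y x)^2) + (Y x)^3 * (Q (Y x) * \<epsilon> (Y x)) + \<alpha>^3 * ((x - \<theta>)/x)^3 * (x^3 * r x))) at_top"
    using eq2 eventually_gt_at_top[of "max \<theta> 0"]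
  proof eventually_elim
    case (elim x)
    have Yp: "Y x > 0" using elim al unfolding Y_def by simp
    from elim(1) have "E (Y x) + r x = 0" by (simp add: c algebra_simps)
    hence h1: "(Y x)^3 * E (Y x) + (Y x)^3 * r x = 0" by (metis distrib_left mult_zero_right)
    have h2: "\<alpha>^3 * ((x - \<theta>)/x)^3 * (x^3 * r x) = (Y x)^3 * r x"
    proof -
      have "((x - \<theta>)/x)^3 * x^3 = (x - \<theta>)^3" using elim by (simp add: power_divide)
      moreover have "(Y x)^3 = \<alpha>^3 * (x - \<theta>)^3" by (simp add: Y_def power_mult_distrib)
      ultimately show ?thesis by (metis (no_types, lifting) mult.assoc mult.commute)
    qed
    have h3: "(Y x)^3 * E (Y x) = (q0 - q2) * (Y x)^2 + (- q1) * Y x + (3*q2 - q0) + (3*q1 * (1 / Y x) + 3*q0 * (1/ (Y x)^2) + (Y x)^3 * (Q (Y x) * \<epsilon> (Y x)))"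
      using alg_t2[OF Yp, of q0 q2 q1 "Q (Y x) * \<epsilon> (Y x)"] unfolding E_def by simp
    show ?case using h1 h2 h3 by linarith
  qed
  have l2: "((\<lambda>x. ((x - \<theta>)/x)^3) \<longlongrightarrow> 1) at_top" by real_asymp
  have "((\<lambda>x. - (3*q1 * (1 / Y x) + 3*q0 * (1/ (Y x)^2) + (Y x)^3 * (Q (Y x) * \<epsilon> (Y x)) + \<alpha>^3 * ((x - \<theta>)/x)^3 * (x^3 * r x)))
        \<longlongrightarrow> - (3*q1 * 0 + 3*q0 * 0 + 0 + \<alpha>^3 * 1 * 0)) at_top"
  proof -
    have a1: "((\<lambda>x. 1 / Y x) \<longlongrightarrow> 0) at_top" using filterlim_compose[OF l[of 1] Y] by simp
    have a2: "((\<lambda>x. 1 / (Y x)^2) \<longlongrightarrow> 0) at_top" using filterlim_compose[OF l[of 2] Y] by simp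
    have a3: "((\<lambda>x. (Y x)^3 * (Q (Y x) * \<epsilon> (Y x))) \<longlongrightarrow> 0) at_top" using filterlim_compose[OF Qe Y] by simp
    show ?thesis by (intro tendsto_minus tendsto_add tendsto_mult tendsto_const a1 a2 a3 l2 rlim tendsto_power)
  qed
  moreover have "eventually (\<lambda>x. - (3*q1 * (1 / Y x) + 3*q0 * (1/ (Y x)^2) + (Y x)^3 * (Q (Y x) * \<epsilon> (Y x)) + \<alpha>^3 * ((x - \<theta>)/x)^3 * (x^3 * r x)) = (q0 - q2) * (Y x)^2 + (- q1) * Y x + (3*q2 - q0)) at_top"
    by (rule eventually_mono[OF eq3]) simp
  ultimately have "((\<lambda>x. (q0 - q2) * (Y x)^2 + (- q1) * Y x + (3*q2 - q0)) \<longlongrightarrow> 0) at_top"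
    using Lim_transform_eventually by fastforce
  from quad_zero[OF Y _ this] have "q0 - q2 = 0" "- q1 = 0" "3 * q2 - q0 = 0" by auto
  thus ?thesis using c by simp
qed



definition ee :: "real \<times> real \<Rightarrow> real \<Rightarrow> real" where
  "ee p x = exp (- ((x - snd p)^2) / (2 * fst p))"

lemma ee_pos: "ee p x > 0" unfolding ee_def by simp

definition dom2 :: "real \<times> real \<Rightarrow> real \<times> real \<Rightarrow> bool" where
  "dom2 p q \<longleftrightarrow> fst p < fst q \<or> (fst p = fst q \<and> snd p < snd q)"

lemma ratio_lim:
  assumes p: "0 < fst p" and q: "0 < fst q" and d: "dom2 p q"
  shows "((\<lambda>x. x^n * (ee p x / ee q x)) \<longlongrightarrow> 0) at_top"
proof -
  obtain w t where pw: "p = (w, t)" by (cases p)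
  obtain W T where qW: "q = (W, T)" by (cases q)
  have w: "w > 0" and W: "W > 0" using p q pw qW by auto
  have r: "ee p x / ee q x = exp (- ((x - t)^2) / (2 * w) + (x - T)^2 / (2 * W))" for x
    unfolding ee_def pw qW by (simp add: exp_diff[symmetric])
  show ?thesis
  proof (cases "w < W")
    case True
    define c where "c = (W - w) / (2 * w * W)"
    define d where "d = t / w - T / W"
    define e where "e = - (t^2) / (2 * w) + T^2 / (2 * W)"
    have c: "c > 0" unfolding c_def using True w W by simp
    have "- ((x - t)^2) / (2 * w) + (x - T)^2 / (2 * W) = - c * x^2 + d * x + e" for x
      unfolding c_def d_def e_def using w W by (simp add: field_simps power2_eq_square)
    hence eq: "x^n * (ee p x / ee q x) = x^n * exp (- c * x^2 + d * x + e)" for x by (simp add: r)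
    have "((\<lambda>x. x^n * exp (- c * x^2 + d * x + e)) \<longlongrightarrow> 0) at_top" using c by real_asymp
    thus ?thesis by (simp only: eq)
  next
    case False
    hence wW: "w = W" and tT: "t < T" using d unfolding dom2_def pw qW by auto
    define c where "c = (T - t) / W"
    define e where "e = (T^2 - t^2) / (2 * W)"
    have c: "c > 0" unfolding c_def using tT W by simp
    have "- ((x - t)^2) / (2 * w) + (x - T)^2 / (2 * W) = - c * x + e" for x
      unfolding c_def e_def using W wW by (simp add: field_simps power2_eq_square)
    hence eq: "x^n * (ee p x / ee q x) = x^n * exp (- c * x + e)" for x by (simp add: r)
    have "((\<lambda>x. x^n * exp (- c * x + e)) \<longlongrightarrow> 0) at_top" using c by real_asymp
    thus ?thesis by (simp only: eq)
  qed
qed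

lemma poly_term_lim:
  assumes "0 < fst p" "0 < fst q" "dom2 p q"
  shows "((\<lambda>x. x^3 * ((C2 * x^2 + C1 * x + C0) * ee p x / ee q x)) \<longlongrightarrow> 0) at_top"
proof -
  have "((\<lambda>x. C2 * (x^5 * (ee p x / ee q x)) + C1 * (x^4 * (ee p x / ee q x)) + C0 * (x^3 * (ee p x / ee q x)))
     \<longlongrightarrow> C2 * 0 + C1 * 0 + C0 * 0) at_top"
    by (intro tendsto_add tendsto_mult tendsto_const ratio_lim assms)
  moreover have "C2 * (x^5 * (ee p x / ee q x)) + C1 * (x^4 * (ee p x / ee q x)) + C0 * (x^3 * (ee p x / ee q x))
     = x^3 * ((C2 * x^2 + C1 * x + C0) * ee p x / ee q x)" for x
    using ee_pos[of q x] by (simp add: field_simps eval_nat_numeral)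
  ultimately show ?thesis by simp
qed

lemma tail_term_lim:
  assumes "0 < fst p" "0 < fst q" "dom2 p q" and al: "\<alpha> > 0"
    and mills: "\<And>y. y > 0 \<Longrightarrow> \<bar>\<rho> y - p5 y\<bar> \<le> 15 / y^7"
  shows "((\<lambda>x. x^3 * ((q2 * (\<alpha> * (x - \<theta>))^2 + q1 * (\<alpha> * (x - \<theta>)) + q0) * \<rho> (\<alpha> * (x - \<theta>)) * ee p x / ee q x)) \<longlongrightarrow> 0) at_top"
proof (rule Lim_null_comparison)
  define A where "A = \<alpha> * (1 + \<bar>\<theta>\<bar>)"
  define M where "M = \<bar>q2\<bar> * A^2 + \<bar>q1\<bar> * A + \<bar>q0\<bar>"
  define K where "K = 20 * M"
  show "((\<lambda>x. K * (x^5 * (ee p x / ee q x))) \<longlongrightarrow> 0) at_top"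
    using tendsto_mult_right_zero[OF ratio_lim[OF assms(1-3), of 5]] by simp
  show "eventually (\<lambda>x. norm (x^3 * ((q2 * (\<alpha> * (x - \<theta>))^2 + q1 * (\<alpha> * (x - \<theta>)) + q0) * \<rho> (\<alpha> * (x - \<theta>)) * ee p x / ee q x))
       \<le> K * (x^5 * (ee p x / ee q x))) at_top"
    using eventually_ge_at_top[of "max 1 (\<theta> + 1 / \<alpha>)"]
  proof eventually_elim
    case (elim x)
    define y where "y = \<alpha> * (x - \<theta>)"
    have x1: "x \<ge> 1" using elim by simp
    have "x - \<theta> \<ge> 1 / \<alpha>" using elim by simp
    hence y1: "y \<ge> 1" unfolding y_def using al by (simp add: field_simps)
    have "x - \<theta> \<le> (1 + \<bar>\<theta>\<bar>) * x"
    proof -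
      have "\<bar>\<theta>\<bar> \<le> \<bar>\<theta>\<bar> * x" using x1 by (simp add: mult_le_cancel_left1)
      thus ?thesis by (simp add: algebra_simps)
    qed
    hence yA: "y \<le> A * x" unfolding y_def A_def using al
      by (metis mult.assoc mult_left_mono less_imp_le)
    have A0: "A \<ge> 0" unfolding A_def using al by simp
    have "\<bar>p5 y\<bar> \<le> 5"
    proof -
      have "1/y \<le> 1" "1/y^3 \<le> 1" "3/y^5 \<le> 3" using y1 by (simp_all add: field_simps one_le_power)
      moreover have "1/y \<ge> 0" "1/y^3 \<ge> 0" "3/y^5 \<ge> 0" using y1 by simp_all
      ultimately show ?thesis unfolding p5_def abs_le_iff by linarith
    qed
    moreover have "15 / y^7 \<le> 15" using y1 by (simp add: field_simps one_le_power)
    ultimately have rb: "\<bar>\<rho> y\<bar> \<le> 20" using mills[of y] y1 by linarith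
    have "\<bar>q2 * y^2 + q1 * y + q0\<bar> \<le> \<bar>q2\<bar> * y^2 + \<bar>q1\<bar> * y + \<bar>q0\<bar>"
      using abs_triangle_ineq[of "q2*y^2+q1*y" q0] abs_triangle_ineq[of "q2*y^2" "q1*y"] y1
      by (simp add: abs_mult)
    also have "\<dots> \<le> \<bar>q2\<bar> * (A*x)^2 + \<bar>q1\<bar> * (A*x) + \<bar>q0\<bar>"
      using yA y1 by (intro add_mono mult_left_mono power_mono) auto
    also have "\<dots> \<le> (\<bar>q2\<bar> * A^2 + \<bar>q1\<bar> * A + \<bar>q0\<bar>) * x^2"
    proof -
      have "\<bar>q1\<bar> * (A*x) \<le> \<bar>q1\<bar> * A * x^2" using x1 A0
        by (simp add: power2_eq_square mult_left_mono mult.assoc)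
      moreover have "\<bar>q0\<bar> \<le> \<bar>q0\<bar> * x^2"
        using mult_left_mono[OF one_le_power[OF x1, of 2], of "\<bar>q0\<bar>"] by simp
      ultimately show ?thesis by (simp add: algebra_simps power_mult_distrib)
    qed
    finally have Qb: "\<bar>q2 * y^2 + q1 * y + q0\<bar> \<le> M * x^2" unfolding M_def .
    have rpos: "ee p x / ee q x > 0" unfolding ee_def by simp
    have "norm (x^3 * ((q2 * y^2 + q1 * y + q0) * \<rho> y * ee p x / ee q x))
        = x^3 * (\<bar>q2 * y^2 + q1 * y + q0\<bar> * \<bar>\<rho> y\<bar>) * (ee p x / ee q x)"
      using x1 ee_pos[of p x] ee_pos[of q x] by (simp add: abs_mult)
    also have "\<dots> \<le> x^3 * ((M * x^2) * 20) * (ee p x / ee q x)"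
    proof -
      have "\<bar>q2 * y^2 + q1 * y + q0\<bar> * \<bar>\<rho> y\<bar> \<le> (M * x^2) * 20"
        by (rule mult_mono[OF Qb rb]) (use Qb in auto)
      hence "x^3 * (\<bar>q2 * y^2 + q1 * y + q0\<bar> * \<bar>\<rho> y\<bar>) \<le> x^3 * ((M * x^2) * 20)"
        by (rule mult_left_mono) (use x1 in simp)
      thus ?thesis by (rule mult_right_mono) (use rpos in simp)
    qed
    also have "\<dots> = K * (x^5 * (ee p x / ee q x))"
    proof -
      have "(x::real)^5 = x^3 * x^2" by (simp add: power_add[symmetric])
      thus ?thesis unfolding K_def by (simp add: mult_ac)
    qed
    finally show ?case unfolding y_def .
  qed
qed



lemma GL:
  fixes S :: "(real \<times> real) set" and C0 C1 C2 :: "real \<times> real \<Rightarrow> real"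
    and J :: "'j set" and u :: "'j \<Rightarrow> real \<times> real" and al :: "'j \<Rightarrow> real"
    and q0 q1 q2 :: "'j \<Rightarrow> real" and rho :: "'j \<Rightarrow> real \<Rightarrow> real"
  assumes finS: "finite S" and finJ: "finite J"
    and Spos: "\<forall>p\<in>S. fst p > 0" and Jpos: "\<forall>j\<in>J. fst (u j) > 0"
    and inj: "inj_on u J" and alpos: "\<forall>j\<in>J. al j > 0"
    and mills: "\<forall>j\<in>J. \<forall>y>0. \<bar>rho j y - p5 y\<bar> \<le> 15 / y^7"
    and zero: "eventually (\<lambda>x. (\<Sum>p\<in>S. (C2 p * x^2 + C1 p * x + C0 p) * ee p x)
        + (\<Sum>j\<in>J. (q2 j * (al j * (x - snd (u j)))^2 + q1 j * (al j * (x - snd (u j))) + q0 j)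
               * rho j (al j * (x - snd (u j))) * ee (u j) x) = 0) at_top"
  shows "(\<forall>p\<in>S. C0 p = 0 \<and> C1 p = 0 \<and> C2 p = 0) \<and> (\<forall>j\<in>J. q0 j = 0 \<and> q1 j = 0 \<and> q2 j = 0)"
proof (rule ccontr)
  assume nc: "\<not> ?thesis"
  define pt where "pt p x = (C2 p * x^2 + C1 p * x + C0 p) * ee p x" for p x
  define tl where "tl j x = (q2 j * (al j * (x - snd (u j)))^2 + q1 j * (al j * (x - snd (u j))) + q0 j)
               * rho j (al j * (x - snd (u j))) * ee (u j) x" for j x
  define nzC where "nzC p \<longleftrightarrow> C0 p \<noteq> 0 \<or> C1 p \<noteq> 0 \<or> C2 p \<noteq> 0" for p
  define nzq where "nzq j \<longleftrightarrow> q0 j \<noteq> 0 \<or> q1 j \<noteq> 0 \<or> q2 j \<noteq> 0" for j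
  define D where "D = {p\<in>S. nzC p} \<union> u ` {j\<in>J. nzq j}"
  have Dfin: "finite D" unfolding D_def using finS finJ by auto
  have Dne: "D \<noteq> {}" using nc unfolding D_def nzC_def nzq_def by blast
  have Dpos: "\<forall>p\<in>D. fst p > 0" unfolding D_def using Spos Jpos by auto
  define W where "W = Max (fst ` D)"
  have "W \<in> fst ` D" unfolding W_def using Dfin Dne by (intro Max_in) auto
  then obtain p0 where p0: "p0 \<in> D" "fst p0 = W" by auto
  define D1 where "D1 = {p\<in>D. fst p = W}"
  have D1fin: "finite D1" unfolding D1_def using Dfin by simp
  have D1ne: "D1 \<noteq> {}" unfolding D1_def using p0 by blast
  define \<Theta> where "\<Theta> = Max (snd ` D1)"
  have "\<Theta> \<in> snd ` D1" unfolding \<Theta>_def using D1fin D1ne by (intro Max_in) auto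
  then obtain p1 where p1: "p1 \<in> D1" "snd p1 = \<Theta>" by auto
  define ps where "ps = (W, \<Theta>)"
  have psD: "ps \<in> D" using p1 unfolding D1_def ps_def by (metis (mono_tags, lifting) mem_Collect_eq prod.collapse)
  have pspos: "fst ps > 0" using psD Dpos by auto
  have domD: "dom2 p ps" if "p \<in> D" "p \<noteq> ps" for p
  proof -
    have "fst p \<le> W" unfolding W_def using that Dfin by (intro Max_ge) auto
    moreover have "snd p < \<Theta>" if "fst p = W"
    proof -
      have "p \<in> D1" unfolding D1_def using \<open>p \<in> D\<close> that by simp
      hence "snd p \<le> \<Theta>" unfolding \<Theta>_def using D1fin by (intro Max_ge) auto
      moreover have "snd p \<noteq> \<Theta>" using \<open>p \<noteq> ps\<close> that unfolding ps_def by (metis prod.collapse)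
      ultimately show ?thesis by simp
    qed
    ultimately show ?thesis unfolding dom2_def ps_def by force
  qed
  define c0 where "c0 = (if ps \<in> S then C0 ps else 0)"
  define c1 where "c1 = (if ps \<in> S then C1 ps else 0)"
  define c2 where "c2 = (if ps \<in> S then C2 ps else 0)"
  have psplit: "(\<Sum>p\<in>S. pt p x) = (c2 * x^2 + c1 * x + c0) * ee ps x + (\<Sum>p\<in>S-{ps}. pt p x)" for x
  proof (cases "ps \<in> S")
    case True
    thus ?thesis using sum.remove[OF finS True, of "\<lambda>p. pt p x"] unfolding c0_def c1_def c2_def pt_def by simp
  next
    case False
    thus ?thesis unfolding c0_def c1_def c2_def by simp
  qed
  have main: "c2 = 0 \<and> c1 = 0 \<and> c0 = 0 \<and> t2 = 0 \<and> t1 = 0 \<and> t0 = 0"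
    if al0: "\<alpha> > 0" and m0: "\<And>y. y > 0 \<Longrightarrow> \<bar>\<rho> y - p5 y\<bar> \<le> 15 / y^7"
      and JR: "JR \<subseteq> J" "\<forall>j\<in>JR. u j \<noteq> ps"
      and tsplit: "\<And>x. (\<Sum>j\<in>J. tl j x) = (t2 * (\<alpha> * (x - \<Theta>))^2 + t1 * (\<alpha> * (x - \<Theta>)) + t0) * \<rho> (\<alpha> * (x - \<Theta>)) * ee ps x
                     + (\<Sum>j\<in>JR. tl j x)"
    for \<alpha> \<rho> t0 t1 t2 JR
  proof -
    define r where "r x = (\<Sum>p\<in>S-{ps}. pt p x / ee ps x) + (\<Sum>j\<in>JR. tl j x / ee ps x)" for x
    have eq: "eventually (\<lambda>x. c2 * x^2 + c1 * x + c0
         + (t2 * (\<alpha> * (x - \<Theta>))^2 + t1 * (\<alpha> * (x - \<Theta>)) + t0) * \<rho> (\<alpha> * (x - \<Theta>)) + r x = 0) at_top"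
      using zero
    proof eventually_elim
      case (elim x)
      hence "(\<Sum>p\<in>S. pt p x) + (\<Sum>j\<in>J. tl j x) = 0" unfolding pt_def tl_def .
      hence h: "((c2 * x^2 + c1 * x + c0) * ee ps x + (\<Sum>p\<in>S-{ps}. pt p x)
          + ((t2 * (\<alpha> * (x - \<Theta>))^2 + t1 * (\<alpha> * (x - \<Theta>)) + t0) * \<rho> (\<alpha> * (x - \<Theta>)) * ee ps x
                     + (\<Sum>j\<in>JR. tl j x))) / ee ps x = 0"
        unfolding psplit tsplit by simp
      have gen: "\<And>A B T C e::real. e > 0 \<Longrightarrow> (A*e + B + (T*e + C))/e = A + T + (B/e + C/e)"
        by (simp add: field_simps)
      note g = gen[OF ee_pos[of ps x], of "c2 * x^2 + c1 * x + c0" "\<Sum>p\<in>S-{ps}. pt p x"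
          "(t2 * (\<alpha> * (x - \<Theta>))^2 + t1 * (\<alpha> * (x - \<Theta>)) + t0) * \<rho> (\<alpha> * (x - \<Theta>))" "\<Sum>j\<in>JR. tl j x"]
      show ?case unfolding r_def sum_divide_distrib[symmetric] using h g by linarith
    qed
    have rlim: "((\<lambda>x. x^3 * r x) \<longlongrightarrow> 0) at_top"
    proof -
      have "((\<lambda>x. (\<Sum>p\<in>S-{ps}. x^3 * (pt p x / ee ps x)) + (\<Sum>j\<in>JR. x^3 * (tl j x / ee ps x))) \<longlongrightarrow> 0 + 0) at_top"
      proof (intro tendsto_add tendsto_null_sum)
        fix p assume p: "p \<in> S - {ps}"
        show "((\<lambda>x. x^3 * (pt p x / ee ps x)) \<longlongrightarrow> 0) at_top"
        proof (cases "nzC p")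
          case True
          hence "p \<in> D" unfolding D_def using p by auto
          hence "dom2 p ps" using domD p by auto
          thus ?thesis unfolding pt_def using poly_term_lim[of p ps "C2 p" "C1 p" "C0 p"] Spos p pspos
            by (simp add: times_divide_eq_right)
        next
          case False
          thus ?thesis unfolding pt_def nzC_def by simp
        qed
      next
        fix j assume j: "j \<in> JR"
        hence jJ: "j \<in> J" using JR by auto
        show "((\<lambda>x. x^3 * (tl j x / ee ps x)) \<longlongrightarrow> 0) at_top"
        proof (cases "nzq j")
          case True
          hence "u j \<in> D" unfolding D_def using jJ by auto
          hence "dom2 (u j) ps" using domD JR j by auto
          moreover have "\<And>y. y > 0 \<Longrightarrow> \<bar>rho j y - p5 y\<bar> \<le> 15 / y^7" using mills jJ by auto
          ultimately show ?thesis unfolding tl_def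
            using tail_term_lim[of "u j" ps "al j" "rho j" "q2 j" "snd (u j)" "q1 j" "q0 j"] Jpos jJ pspos alpos
            by (simp add: times_divide_eq_right)
        next
          case False
          thus ?thesis unfolding tl_def nzq_def by simp
        qed
      qed
      moreover have "x^3 * r x = (\<Sum>p\<in>S-{ps}. x^3 * (pt p x / ee ps x)) + (\<Sum>j\<in>JR. x^3 * (tl j x / ee ps x))" for x
        unfolding r_def by (simp add: sum_distrib_left distrib_left)
      ultimately show ?thesis by simp
    qed
    show ?thesis using top_lemma[OF al0 m0 eq rlim] by simp
  qed
  show False
  proof (cases "\<exists>j\<in>J. u j = ps")
    case True
    then obtain j0 where j0: "j0 \<in> J" "u j0 = ps" by auto
    have "J - {j0} \<subseteq> J" by auto
    moreover have "\<forall>j\<in>J - {j0}. u j \<noteq> ps" using inj j0 by (metis DiffE inj_on_eq_iff singletonI)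
    moreover have "(\<Sum>j\<in>J. tl j x) = (q2 j0 * (al j0 * (x - \<Theta>))^2 + q1 j0 * (al j0 * (x - \<Theta>)) + q0 j0)
         * rho j0 (al j0 * (x - \<Theta>)) * ee ps x + (\<Sum>j\<in>J-{j0}. tl j x)" for x
      using sum.remove[OF finJ j0(1), of "\<lambda>j. tl j x"] j0(2) unfolding tl_def ps_def by simp
    ultimately have z: "c2 = 0 \<and> c1 = 0 \<and> c0 = 0 \<and> q2 j0 = 0 \<and> q1 j0 = 0 \<and> q0 j0 = 0"
      using main[of "al j0" "rho j0" "J - {j0}"] alpos mills j0 by blast
    show False using psD unfolding D_def
    proof
      assume "ps \<in> {p \<in> S. nzC p}"
      thus False using z unfolding c0_def c1_def c2_def nzC_def by auto
    next
      assume "ps \<in> u ` {j \<in> J. nzq j}"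
      then obtain j where "j \<in> J" "nzq j" "u j = ps" by auto
      hence "j = j0" using inj j0 by (metis inj_on_eq_iff)
      thus False using z \<open>nzq j\<close> unfolding nzq_def by auto
    qed
  next
    case False
    have m: "\<And>y. y > 0 \<Longrightarrow> \<bar>p5 y - p5 y\<bar> \<le> 15 / y^7" by simp
    have "(\<Sum>j\<in>J. tl j x) = (0 * (1 * (x - \<Theta>))^2 + 0 * (1 * (x - \<Theta>)) + 0) * p5 (1 * (x - \<Theta>)) * ee ps x
                     + (\<Sum>j\<in>J. tl j x)" for x by simp
    hence z: "c2 = 0 \<and> c1 = 0 \<and> c0 = 0"
      using main[of 1 p5 J 0 0 0] m False by auto
    show False using psD unfolding D_def
    proof
      assume "ps \<in> {p \<in> S. nzC p}"
      thus False using z unfolding c0_def c1_def c2_def nzC_def by auto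
    next
      assume "ps \<in> u ` {j \<in> J. nzq j}"
      thus False using False by auto
    qed
  qed
qed



lemma phi_chain:
  "(g has_real_derivative g') (at x within S) \<Longrightarrow> D = - g x * std_normal_density (g x) * g'
   \<Longrightarrow> ((\<lambda>x. std_normal_density (g x)) has_real_derivative D) (at x within S)"
  using DERIV_chain2[OF phi_deriv] by (simp add: mult.commute)

lemma Phi_chain:
  "(g has_real_derivative g') (at x within S) \<Longrightarrow> D = std_normal_density (g x) * g'
   \<Longrightarrow> ((\<lambda>x. std_normal_cdf (g x)) has_real_derivative D) (at x within S)"
  using DERIV_chain2[OF Phi_deriv] by (simp add: mult.commute)

lemma dsn_theta_eq:
  assumes v: "v > 0"
  shows "dsn_theta x \<theta> v m = 2 / sqrt v * ((x - \<theta>) / v * std_normal_density ((x - \<theta>) / sqrt v) * std_normal_cdf (m * (x - \<theta>) / sqrt v)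
        - m / sqrt v * std_normal_density ((x - \<theta>) / sqrt v) * std_normal_density (m * (x - \<theta>) / sqrt v))"
proof -
  have s: "sqrt v > 0" using v by simp
  have "((\<lambda>t. skew_normal x t v m) has_real_derivative
     2 / sqrt v * ((x - \<theta>) / v * std_normal_density ((x - \<theta>) / sqrt v) * std_normal_cdf (m * (x - \<theta>) / sqrt v)
        - m / sqrt v * std_normal_density ((x - \<theta>) / sqrt v) * std_normal_density (m * (x - \<theta>) / sqrt v))) (at \<theta>)"
    unfolding skew_normal_def
    using s v by (auto intro!: derivative_eq_intros phi_chain Phi_chain simp: field_simps)
  thus ?thesis unfolding dsn_theta_def by (rule DERIV_imp_deriv)
qed

lemma dsn_m_eq:
  assumes v: "v > 0"
  shows "dsn_m x \<theta> v m = 2 / sqrt v * std_normal_density ((x - \<theta>) / sqrt v) * std_normal_density (m * (x - \<theta>) / sqrt v) * ((x - \<theta>) / sqrt v)"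
proof -
  define s where "s = sqrt v"
  have s: "s > 0" using v by (simp add: s_def)
  have vs: "v = s^2" using v by (simp add: s_def)
  have "((\<lambda>n. skew_normal x \<theta> v n) has_real_derivative
     2 / sqrt v * std_normal_density ((x - \<theta>) / sqrt v) * std_normal_density (m * (x - \<theta>) / sqrt v) * ((x - \<theta>) / sqrt v)) (at m)"
    unfolding skew_normal_def
    unfolding vs using s by (auto intro!: derivative_eq_intros phi_chain Phi_chain simp: field_simps power2_eq_square)
  thus ?thesis unfolding dsn_m_def by (rule DERIV_imp_deriv)
qed

lemma dsn_v_eq:
  assumes v: "v > 0"
  shows "dsn_v x \<theta> v m = 1 / (v * sqrt v) * (((x - \<theta>)^2 / v - 1) * std_normal_density ((x - \<theta>) / sqrt v) * std_normal_cdf (m * (x - \<theta>) / sqrt v)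
        - m * (x - \<theta>) / sqrt v * std_normal_density ((x - \<theta>) / sqrt v) * std_normal_density (m * (x - \<theta>) / sqrt v))"
proof -
  define s where "s = sqrt v"
  have s: "s > 0" using v by (simp add: s_def)
  have vs: "v = s^2" using v by (simp add: s_def)
  have "((\<lambda>w. skew_normal x \<theta> w m) has_real_derivative
     1 / (v * sqrt v) * (((x - \<theta>)^2 / v - 1) * std_normal_density ((x - \<theta>) / sqrt v) * std_normal_cdf (m * (x - \<theta>) / sqrt v)
        - m * (x - \<theta>) / sqrt v * std_normal_density ((x - \<theta>) / sqrt v) * std_normal_density (m * (x - \<theta>) / sqrt v))) (at v)"
    unfolding skew_normal_def
    unfolding vs using s by (auto intro!: derivative_eq_intros phi_chain Phi_chain simp: field_simps power2_eq_square)
  thus ?thesis unfolding dsn_v_def by (rule DERIV_imp_deriv)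
qed



lemma AE_cont_zero:
  fixes f :: "real \<Rightarrow> real"
  assumes c: "continuous_on UNIV f" and ae: "AE x in lborel. f x = 0"
  shows "f x = 0"
proof (rule ccontr)
  assume "f x \<noteq> 0"
  then obtain e where e: "e > 0" "\<And>y. dist x y < e \<Longrightarrow> f y \<noteq> 0"
    using continuous_on_avoid[OF c, of x 0] by auto
  from ae obtain N where N: "{y \<in> space lborel. \<not> f y = 0} \<subseteq> N" "emeasure lborel N = 0" "N \<in> sets lborel"
    by (rule AE_E)
  have "{x - e <..< x + e} \<subseteq> N"
  proof
    fix y assume "y \<in> {x - e <..< x + e}"
    hence "dist x y < e" by (auto simp: dist_real_def)
    thus "y \<in> N" using e N(1) by auto
  qed
  hence "emeasure lborel {x - e <..< x + e} \<le> emeasure lborel N" by (rule emeasure_mono) (use N in auto)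
  hence "ennreal ((x + e) - (x - e)) \<le> 0" using N e by simp
  thus False using e by (simp add: ennreal_le_iff2 ennreal_eq_0_iff)
qed

definition cplus :: real where "cplus = std_normal_cdf 0 + (LBINT t:{0..}. std_normal_density t)"
definition rplus :: "real \<Rightarrow> real" where "rplus y = (cplus - std_normal_cdf y) / std_normal_density y"
definition rminus :: "real \<Rightarrow> real" where "rminus y = std_normal_cdf (- y) / std_normal_density y"

lemma mills_rho:
  assumes g: "\<And>y. y > 0 \<Longrightarrow> (g has_real_derivative - std_normal_density y) (at y)"
    and lim: "(g \<longlongrightarrow> 0) at_top" and y: "y > 0"
  shows "\<bar>g y / std_normal_density y - p5 y\<bar> \<le> 15 / y^7"
proof -
  have u: "g y \<le> std_normal_density y * p5 y" using mills_upper[OF g lim y] by (simp add: p5_def)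
  have l: "std_normal_density y * (p5 y - 15 / y^7) \<le> g y" using mills_lower[OF g lim y] by (simp add: p5_def)
  have ph: "std_normal_density y > 0" by (rule phi_pos)
  have "g y / std_normal_density y \<le> p5 y" using u ph by (simp add: divide_le_eq mult.commute)
  moreover have "p5 y - 15 / y^7 \<le> g y / std_normal_density y" using l ph by (simp add: le_divide_eq mult.commute)
  ultimately show ?thesis by (simp add: abs_le_iff)
qed

lemma rplus_mills: "y > 0 \<Longrightarrow> \<bar>rplus y - p5 y\<bar> \<le> 15 / y^7"
  unfolding rplus_def
proof (rule mills_rho)
  show "((\<lambda>y. cplus - std_normal_cdf y) \<longlongrightarrow> 0) at_top"
    using tendsto_diff[OF tendsto_const Phi_top, of cplus] unfolding cplus_def by simp
qed (auto intro!: derivative_eq_intros Phi_deriv)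

lemma phi_even: "std_normal_density (- y) = std_normal_density y"
  unfolding std_normal_density_def by simp

lemma rminus_mills: "y > 0 \<Longrightarrow> \<bar>rminus y - p5 y\<bar> \<le> 15 / y^7"
  unfolding rminus_def
proof (rule mills_rho)
  show "((\<lambda>y. std_normal_cdf (- y)) \<longlongrightarrow> 0) at_top"
    by (rule filterlim_compose[OF Phi_bot filterlim_uminus_at_bot_at_top])
  show "((\<lambda>y. std_normal_cdf (- y)) has_real_derivative - std_normal_density y) (at y)" for y
    by (rule Phi_chain[of uminus "-1"]) (auto intro!: derivative_eq_intros simp: phi_even)
qed

lemma L1: "v > 0 \<Longrightarrow> std_normal_density ((x - \<theta>) / sqrt v) = 1 / sqrt (2 * pi) * ee (v, \<theta>) x"
  unfolding std_normal_density_def ee_def by (simp add: power_divide)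

lemma L2: "v > 0 \<Longrightarrow> std_normal_density ((x - \<theta>) / sqrt v) * std_normal_density (m * (x - \<theta>) / sqrt v)
   = (1 / sqrt (2 * pi))^2 * ee (v / (1 + m^2), \<theta>) x"
proof -
  assume v: "v > 0"
  have "exp (- (((x - \<theta>) / sqrt v)^2) / 2) * exp (- ((m * (x - \<theta>) / sqrt v)^2) / 2)
      = exp (- ((x - \<theta>)^2) / (2 * (v / (1 + m^2))))"
  proof -
    have a: "((x-\<theta>)/sqrt v)^2 = (x-\<theta>)^2/v" using v by (simp add: power_divide)
    have b: "(m*(x-\<theta>)/sqrt v)^2 = m^2*(x-\<theta>)^2/v" using v by (simp add: power_divide power_mult_distrib)
    have c: "1 + m^2 > 0" by (simp add: add_pos_nonneg)
    have "- ((x-\<theta>)^2/v) / 2 + - (m^2*(x-\<theta>)^2/v) / 2 = - ((x - \<theta>)^2) / (2 * (v / (1 + m^2)))"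
      using v c by (simp add: field_simps)
    thus ?thesis unfolding exp_add[symmetric] a b by simp
  qed
  thus ?thesis unfolding std_normal_density_def ee_def by (simp add: power2_eq_square)
qed



lemma Phi_cont'[continuous_intros]: "continuous_on S f \<Longrightarrow> continuous_on S (\<lambda>x. std_normal_cdf (f x))"
  by (rule continuous_on_compose2[OF Phi_cont[of UNIV]]) auto

definition KK :: real where "KK = 1 / sqrt (2 * pi)"

lemma KK_pos: "KK > 0" unfolding KK_def by simp

lemma alg_comb: "s > (0::real) \<Longrightarrow> a * (2 / s * P * R) + b * (2 / s * ((x - \<theta>) / s^2 * P * R - m / s * P * Q))
   + c * (1 / (s^2 * s) * (((x - \<theta>)^2 / s^2 - 1) * P * R - m * (x - \<theta>) / s * P * Q))
   + d * (2 / s * P * Q * ((x - \<theta>) / s))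
   = P * R * (2 * a / s + 2 * b * (x - \<theta>) / (s * s^2) + c * ((x - \<theta>)^2 / s^2 - 1) / (s^2 * s))
        + (P * Q) * (- 2 * b * m / s^2 - c * m * (x - \<theta>) / (s^2)^2 + 2 * d * (x - \<theta>) / s^2)"
  by (simp add: field_simps) (simp add: algebra_simps power_def)

lemma comb:
  assumes v: "v > 0"
  shows "a * skew_normal x \<theta> v m + b * dsn_theta x \<theta> v m + c * dsn_v x \<theta> v m + d * dsn_m x \<theta> v m
   = ee (v, \<theta>) x * std_normal_cdf (m * (x - \<theta>) / sqrt v)
       * (KK / sqrt v * (2 * a + 2 * b * (x - \<theta>) / v + c * ((x - \<theta>)^2 / v - 1) / v))
     + ee (v / (1 + m^2), \<theta>) x * (KK^2 * (- 2 * b * m / v - c * m * (x - \<theta>) / v^2 + 2 * d * (x - \<theta>) / v))"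
proof -
  define s where "s = sqrt v"
  have s: "s > 0" using v by (simp add: s_def)
  have vs: "v = s^2" using v by (simp add: s_def)
  define P where "P = std_normal_density ((x - \<theta>) / s)"
  define Q where "Q = std_normal_density (m * (x - \<theta>) / s)"
  define R where "R = std_normal_cdf (m * (x - \<theta>) / s)"
  have P: "P = KK * ee (v, \<theta>) x" unfolding P_def KK_def s_def using L1[OF v] by simp
  have PQ: "P * Q = KK^2 * ee (v / (1 + m^2), \<theta>) x" unfolding P_def Q_def KK_def s_def using L2[OF v] by simp
  have "a * skew_normal x \<theta> v m + b * dsn_theta x \<theta> v m + c * dsn_v x \<theta> v m + d * dsn_m x \<theta> v m
      = P * R * (2 * a / s + 2 * b * (x - \<theta>) / (s * v) + c * ((x - \<theta>)^2 / v - 1) / (v * s))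
        + (P * Q) * (- 2 * b * m / v - c * m * (x - \<theta>) / v^2 + 2 * d * (x - \<theta>) / v)"
    unfolding skew_normal_def dsn_theta_eq[OF v] dsn_v_eq[OF v] dsn_m_eq[OF v]
      s_def[symmetric]
    unfolding P_def[symmetric] Q_def[symmetric] R_def[symmetric]
    unfolding vs by (rule alg_comb[OF s])
  also have "\<dots> = ee (v, \<theta>) x * R * (KK / s * (2 * a + 2 * b * (x - \<theta>) / v + c * ((x - \<theta>)^2 / v - 1) / v))
     + ee (v / (1 + m^2), \<theta>) x * (KK^2 * (- 2 * b * m / v - c * m * (x - \<theta>) / v^2 + 2 * d * (x - \<theta>) / v))"
    unfolding PQ unfolding P using s v by (simp add: field_simps)
  finally show ?thesis unfolding R_def s_def .
qed

definition "kap m = (if m > 0 then cplus else 0)"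
definition "sig m = (if m > 0 then -1 else (1::real))"
definition "rh m = (if m > 0 then rplus else rminus)"
definition "al v m = \<bar>m\<bar> / sqrt v"

lemma far:
  assumes v: "v > 0" and m: "m \<noteq> 0"
  shows "ee (v, \<theta>) x * std_normal_cdf (m * (x - \<theta>) / sqrt v)
    = kap m * ee (v, \<theta>) x + sig m * KK * rh m (al v m * (x - \<theta>)) * ee (v / (1 + m^2), \<theta>) x"
proof -
  define y where "y = al v m * (x - \<theta>)"
  have ph: "std_normal_density y > 0" by (rule phi_pos)
  have L1': "std_normal_density ((x - \<theta>) / sqrt v) = KK * ee (v, \<theta>) x" using L1[OF v] unfolding KK_def by simp
  have key: "ee (v, \<theta>) x * std_normal_density y = KK * ee (v / (1 + m^2), \<theta>) x"
  proof -
    have "y = \<bar>m\<bar> * (x - \<theta>) / sqrt v" unfolding y_def al_def by simp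
    hence "std_normal_density ((x - \<theta>) / sqrt v) * std_normal_density y = KK^2 * ee (v / (1 + \<bar>m\<bar>^2), \<theta>) x"
      using L2[OF v, of x \<theta> "\<bar>m\<bar>"] unfolding KK_def by simp
    hence "KK * (ee (v, \<theta>) x * std_normal_density y) = KK * (KK * ee (v / (1 + m^2), \<theta>) x)"
      unfolding L1' by (simp add: power2_eq_square mult_ac)
    thus ?thesis using KK_pos by simp
  qed
  show ?thesis
  proof (cases "m > 0")
    case True
    have arg: "m * (x - \<theta>) / sqrt v = y" unfolding y_def al_def using True by simp
    have cdf: "std_normal_cdf y = cplus - std_normal_density y * rplus y"
      unfolding rplus_def using ph by simp
    have "ee (v, \<theta>) x * std_normal_cdf (m * (x - \<theta>) / sqrt v)
        = ee (v, \<theta>) x * (cplus - std_normal_density y * rplus y)" by (simp only: arg cdf)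
    also have "\<dots> = cplus * ee (v, \<theta>) x - (ee (v, \<theta>) x * std_normal_density y) * rplus y"
      by (simp add: algebra_simps)
    also have "\<dots> = cplus * ee (v, \<theta>) x - KK * ee (v / (1 + m^2), \<theta>) x * rplus y"
      unfolding key ..
    finally show ?thesis unfolding kap_def sig_def rh_def y_def[symmetric] using True
      by (simp add: algebra_simps)
  next
    case False
    hence mn: "m < 0" using m by simp
    have arg: "m * (x - \<theta>) / sqrt v = - y" unfolding y_def al_def using mn by simp
    have cdf: "std_normal_cdf (- y) = std_normal_density y * rminus y"
      unfolding rminus_def using ph by simp
    have "ee (v, \<theta>) x * std_normal_cdf (m * (x - \<theta>) / sqrt v)
        = ee (v, \<theta>) x * (std_normal_density y * rminus y)" by (simp only: arg cdf)
    also have "\<dots> = (ee (v, \<theta>) x * std_normal_density y) * rminus y"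
      by (simp add: algebra_simps)
    also have "\<dots> = KK * ee (v / (1 + m^2), \<theta>) x * rminus y"
      unfolding key ..
    finally show ?thesis unfolding kap_def sig_def rh_def y_def[symmetric] using False
      by (simp add: algebra_simps)
  qed
qed

definition "A0 a c v = KK / sqrt v * (2 * a - c / v)"
definition "A1 b v = KK / sqrt v * (2 * b / v)"
definition "A2 c v = KK / sqrt v * (c / v^2)"
definition "B0 b v m = KK^2 * (- 2 * b * m / v)"
definition "B1 c d v m = KK^2 * (- c * m / v^2 + 2 * d / v)"

lemma comp:
  assumes v: "v > 0" and m: "m \<noteq> 0"
  shows "a * skew_normal x \<theta> v m + b * dsn_theta x \<theta> v m + c * dsn_v x \<theta> v m + d * dsn_m x \<theta> v m
   = (kap m * A2 c v * x^2 + kap m * (A1 b v - 2 * A2 c v * \<theta>) * x + kap m * (A0 a c v - A1 b v * \<theta> + A2 c v * \<theta>^2)) * ee (v, \<theta>) x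
   + (0 * x^2 + B1 c d v m * x + (B0 b v m - B1 c d v m * \<theta>)) * ee (v / (1 + m^2), \<theta>) x
   + (sig m * KK * A2 c v / (al v m)^2 * (al v m * (x - \<theta>))^2 + sig m * KK * A1 b v / al v m * (al v m * (x - \<theta>))
       + sig m * KK * A0 a c v) * rh m (al v m * (x - \<theta>)) * ee (v / (1 + m^2), \<theta>) x"
proof -
  have alp: "al v m > 0" unfolding al_def using v m by simp
  have Ap: "KK / sqrt v * (2 * a + 2 * b * (x - \<theta>) / v + c * ((x - \<theta>)^2 / v - 1) / v)
      = A0 a c v + A1 b v * (x - \<theta>) + A2 c v * (x - \<theta>)^2"
  proof -
    have inner: "2 * a + 2 * b * (x - \<theta>) / v + c * ((x - \<theta>)^2 / v - 1) / v
       = (2 * a - c / v) + (2 * b / v) * (x - \<theta>) + (c / v^2) * (x - \<theta>)^2"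
      using v by (simp add: field_simps power2_eq_square)
    show ?thesis unfolding A0_def A1_def A2_def inner by (simp only: distrib_left mult.assoc)
  qed
  have Bp: "KK^2 * (- 2 * b * m / v - c * m * (x - \<theta>) / v^2 + 2 * d * (x - \<theta>) / v)
      = B0 b v m + B1 c d v m * (x - \<theta>)"
    unfolding B0_def B1_def using v by (simp add: field_simps power2_eq_square)
  have q: "sig m * KK * A2 c v / (al v m)^2 * (al v m * (x - \<theta>))^2 + sig m * KK * A1 b v / al v m * (al v m * (x - \<theta>))
       + sig m * KK * A0 a c v = sig m * KK * (A0 a c v + A1 b v * (x - \<theta>) + A2 c v * (x - \<theta>)^2)"
    using alp by (simp add: field_simps power2_eq_square)
  show ?thesis
    unfolding comb[OF v] Ap Bp q
    unfolding far[OF v m] by (simp add: algebra_simps power2_eq_square)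
qed



lemma regroup:
  fixes a b :: "'i \<Rightarrow> real \<times> real"
  assumes finI: "finite I" and finS: "finite S" and aS: "a ` I \<subseteq> S" and bS: "b ` I \<subseteq> S"
  shows "(\<Sum>i\<in>I. (F2 i * x^2 + F1 i * x + F0 i) * ee (a i) x + (G2 i * x^2 + G1 i * x + G0 i) * ee (b i) x)
   = (\<Sum>p\<in>S. ((\<Sum>i\<in>I. (if a i = p then F2 i else 0) + (if b i = p then G2 i else 0)) * x^2
              + (\<Sum>i\<in>I. (if a i = p then F1 i else 0) + (if b i = p then G1 i else 0)) * x
              + (\<Sum>i\<in>I. (if a i = p then F0 i else 0) + (if b i = p then G0 i else 0))) * ee p x)"
proof -
  have inner: "((\<Sum>i\<in>I. (if a i = p then F2 i else 0) + (if b i = p then G2 i else 0)) * x^2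
              + (\<Sum>i\<in>I. (if a i = p then F1 i else 0) + (if b i = p then G1 i else 0)) * x
              + (\<Sum>i\<in>I. (if a i = p then F0 i else 0) + (if b i = p then G0 i else 0))) * ee p x
      = (\<Sum>i\<in>I. (if a i = p then (F2 i * x^2 + F1 i * x + F0 i) * ee (a i) x else 0)
               + (if b i = p then (G2 i * x^2 + G1 i * x + G0 i) * ee (b i) x else 0))" for p
  proof -
    define X2 where "X2 i = (if a i = p then F2 i else 0) + (if b i = p then G2 i else 0)" for i
    define X1 where "X1 i = (if a i = p then F1 i else 0) + (if b i = p then G1 i else 0)" for i
    define X0 where "X0 i = (if a i = p then F0 i else 0) + (if b i = p then G0 i else 0)" for i
    have pt: "(if a i = p then (F2 i * x^2 + F1 i * x + F0 i) * ee (a i) x else 0)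
               + (if b i = p then (G2 i * x^2 + G1 i * x + G0 i) * ee (b i) x else 0)
         = (X2 i * x^2 + X1 i * x + X0 i) * ee p x" for i
      unfolding X2_def X1_def X0_def
      by (cases "a i = p"; cases "b i = p") (simp_all add: algebra_simps)
    have "(\<Sum>i\<in>I. (X2 i * x^2 + X1 i * x + X0 i) * ee p x)
        = ((\<Sum>i\<in>I. X2 i) * x^2 + (\<Sum>i\<in>I. X1 i) * x + (\<Sum>i\<in>I. X0 i)) * ee p x"
    proof -
      have e: "(X2 i * x^2 + X1 i * x + X0 i) * ee p x = X2 i * (x^2 * ee p x) + X1 i * (x * ee p x) + X0 i * ee p x" for i
        by (simp add: algebra_simps)
      show ?thesis unfolding e sum.distrib sum_distrib_right[symmetric] by (simp add: algebra_simps)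
    qed
    moreover have "(\<Sum>i\<in>I. (if a i = p then (F2 i * x^2 + F1 i * x + F0 i) * ee (a i) x else 0)
               + (if b i = p then (G2 i * x^2 + G1 i * x + G0 i) * ee (b i) x else 0))
        = (\<Sum>i\<in>I. (X2 i * x^2 + X1 i * x + X0 i) * ee p x)"
      by (rule sum.cong[OF refl]) (rule pt)
    ultimately have "(\<Sum>i\<in>I. (if a i = p then (F2 i * x^2 + F1 i * x + F0 i) * ee (a i) x else 0)
               + (if b i = p then (G2 i * x^2 + G1 i * x + G0 i) * ee (b i) x else 0))
        = ((\<Sum>i\<in>I. X2 i) * x^2 + (\<Sum>i\<in>I. X1 i) * x + (\<Sum>i\<in>I. X0 i)) * ee p x" by simp
    thus ?thesis unfolding X2_def X1_def X0_def by (rule sym)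
  qed
  have "(\<Sum>p\<in>S. \<Sum>i\<in>I. (if a i = p then (F2 i * x^2 + F1 i * x + F0 i) * ee (a i) x else 0)
               + (if b i = p then (G2 i * x^2 + G1 i * x + G0 i) * ee (b i) x else 0))
      = (\<Sum>i\<in>I. \<Sum>p\<in>S. (if a i = p then (F2 i * x^2 + F1 i * x + F0 i) * ee (a i) x else 0)
               + (if b i = p then (G2 i * x^2 + G1 i * x + G0 i) * ee (b i) x else 0))"
    by (rule sum.swap)
  also have "\<dots> = (\<Sum>i\<in>I. (F2 i * x^2 + F1 i * x + F0 i) * ee (a i) x + (G2 i * x^2 + G1 i * x + G0 i) * ee (b i) x)"
  proof (rule sum.cong[OF refl])
    fix i assume i: "i \<in> I"
    hence "a i \<in> S" "b i \<in> S" using aS bS by auto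
    thus "(\<Sum>p\<in>S. (if a i = p then (F2 i * x^2 + F1 i * x + F0 i) * ee (a i) x else 0)
               + (if b i = p then (G2 i * x^2 + G1 i * x + G0 i) * ee (b i) x else 0))
        = (F2 i * x^2 + F1 i * x + F0 i) * ee (a i) x + (G2 i * x^2 + G1 i * x + G0 i) * ee (b i) x"
      using finS by (simp add: sum.distrib)
  qed
  finally show ?thesis unfolding inner by simp
qed

lemma indep:
  fixes k :: nat and \<theta> v m a b c d :: "nat \<Rightarrow> real"
  assumes vpos: "\<And>j. j < k \<Longrightarrow> v j > 0" and mnz: "\<And>j. j < k \<Longrightarrow> m j \<noteq> 0"
    and injw: "inj_on (\<lambda>j. (v j / (1 + (m j)^2), \<theta> j)) {..<k}"
    and ae: "AE x in lborel. (\<Sum>j<k. a j * skew_normal x (\<theta> j) (v j) (m j)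
                                  + b j * dsn_theta x (\<theta> j) (v j) (m j)
                                  + c j * dsn_v x (\<theta> j) (v j) (m j)
                                  + d j * dsn_m x (\<theta> j) (v j) (m j)) = 0"
  shows "\<forall>j<k. a j = 0 \<and> b j = 0 \<and> c j = 0 \<and> d j = 0"
proof -
  define Fn where "Fn x = (\<Sum>j<k. a j * skew_normal x (\<theta> j) (v j) (m j)
                                  + b j * dsn_theta x (\<theta> j) (v j) (m j)
                                  + c j * dsn_v x (\<theta> j) (v j) (m j)
                                  + d j * dsn_m x (\<theta> j) (v j) (m j))" for x
  have Fcomb: "Fn = (\<lambda>x. \<Sum>j<k. ee (v j, \<theta> j) x * std_normal_cdf (m j * (x - \<theta> j) / sqrt (v j))
       * (KK / sqrt (v j) * (2 * a j + 2 * b j * (x - \<theta> j) / v j + c j * ((x - \<theta> j)^2 / v j - 1) / v j))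
     + ee (v j / (1 + (m j)^2), \<theta> j) x * (KK^2 * (- 2 * b j * m j / v j - c j * m j * (x - \<theta> j) / (v j)^2 + 2 * d j * (x - \<theta> j) / v j)))"
    unfolding Fn_def by (rule ext, rule sum.cong[OF refl], rule comb) (simp add: vpos)
  have cont: "continuous_on UNIV Fn"
  proof -
    have vne: "v j \<noteq> 0" "sqrt (v j) \<noteq> 0" "(v j)^2 \<noteq> 0" "2 * v j \<noteq> 0"
       "2 * (v j / (1 + (m j)^2)) \<noteq> 0" if "j \<in> {..<k}" for j
      using vpos[of j] that add_pos_nonneg[of 1 "(m j)^2"] by auto
    show ?thesis unfolding Fcomb ee_def fst_conv snd_conv
      apply (intro continuous_intros)
      using vne by blast+
  qed
  have allz: "Fn x = 0" for x
    by (rule AE_cont_zero[OF cont]) (use ae in \<open>simp add: Fn_def\<close>)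
  define F2 where "F2 j = kap (m j) * A2 (c j) (v j)" for j
  define F1 where "F1 j = kap (m j) * (A1 (b j) (v j) - 2 * A2 (c j) (v j) * \<theta> j)" for j
  define F0 where "F0 j = kap (m j) * (A0 (a j) (c j) (v j) - A1 (b j) (v j) * \<theta> j + A2 (c j) (v j) * (\<theta> j)^2)" for j
  define G1 where "G1 j = B1 (c j) (d j) (v j) (m j)" for j
  define G0 where "G0 j = B0 (b j) (v j) (m j) - B1 (c j) (d j) (v j) (m j) * \<theta> j" for j
  define alj where "alj j = al (v j) (m j)" for j
  define Q2 where "Q2 j = sig (m j) * KK * A2 (c j) (v j) / (alj j)^2" for j
  define Q1 where "Q1 j = sig (m j) * KK * A1 (b j) (v j) / alj j" for j
  define Q0 where "Q0 j = sig (m j) * KK * A0 (a j) (c j) (v j)" for j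
  define pv where "pv j = (v j, \<theta> j)" for j
  define pw where "pw j = (v j / (1 + (m j)^2), \<theta> j)" for j
  define S where "S = pv ` {..<k} \<union> pw ` {..<k}"
  define C2 where "C2 p = (\<Sum>i<k. (if pv i = p then F2 i else 0) + (if pw i = p then (\<lambda>_. 0) i else 0))" for p
  define C1 where "C1 p = (\<Sum>i<k. (if pv i = p then F1 i else 0) + (if pw i = p then G1 i else 0))" for p
  define C0 where "C0 p = (\<Sum>i<k. (if pv i = p then F0 i else 0) + (if pw i = p then G0 i else 0))" for p
  have Fcomp: "Fn x = (\<Sum>j<k. (F2 j * x^2 + F1 j * x + F0 j) * ee (pv j) x + ((\<lambda>_. 0) j * x^2 + G1 j * x + G0 j) * ee (pw j) x)
     + (\<Sum>j<k. (Q2 j * (alj j * (x - snd (pw j)))^2 + Q1 j * (alj j * (x - snd (pw j))) + Q0 j)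
               * rh (m j) (alj j * (x - snd (pw j))) * ee (pw j) x)" for x
    unfolding Fn_def sum.distrib[symmetric]
  proof (rule sum.cong[OF refl])
    fix j assume "j \<in> {..<k}"
    hence j: "j < k" by simp
    show "a j * skew_normal x (\<theta> j) (v j) (m j) + b j * dsn_theta x (\<theta> j) (v j) (m j) +
          c j * dsn_v x (\<theta> j) (v j) (m j) + d j * dsn_m x (\<theta> j) (v j) (m j) =
         (F2 j * x^2 + F1 j * x + F0 j) * ee (pv j) x + (0 * x^2 + G1 j * x + G0 j) * ee (pw j) x +
         (Q2 j * (alj j * (x - snd (pw j)))^2 + Q1 j * (alj j * (x - snd (pw j))) + Q0 j) *
         rh (m j) (alj j * (x - snd (pw j))) * ee (pw j) x"
      unfolding F2_def F1_def F0_def G1_def G0_def alj_def Q2_def Q1_def Q0_def pv_def pw_def snd_conv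
      by (rule comp[OF vpos[OF j] mnz[OF j]])
  qed
  have GLr: "(\<forall>p\<in>S. C0 p = 0 \<and> C1 p = 0 \<and> C2 p = 0) \<and> (\<forall>j\<in>{..<k}. Q0 j = 0 \<and> Q1 j = 0 \<and> Q2 j = 0)"
  proof (rule GL[where rho="\<lambda>j. rh (m j)"])
    show "finite S" unfolding S_def by simp
    show "finite {..<k}" by simp
    show "\<forall>p\<in>S. fst p > 0" unfolding S_def pv_def pw_def using vpos
      by (auto intro!: divide_pos_pos add_pos_nonneg)
    show "\<forall>j\<in>{..<k}. fst (pw j) > 0" unfolding pw_def using vpos
      by (auto intro!: divide_pos_pos add_pos_nonneg)
    show "inj_on pw {..<k}" using injw unfolding pw_def .
    show "\<forall>j\<in>{..<k}. alj j > 0" unfolding alj_def al_def using vpos mnz by auto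
    show "\<forall>j\<in>{..<k}. \<forall>y>0. \<bar>rh (m j) y - p5 y\<bar> \<le> 15 / y^7"
      unfolding rh_def using rplus_mills rminus_mills by auto
    show "eventually (\<lambda>x. (\<Sum>p\<in>S. (C2 p * x^2 + C1 p * x + C0 p) * ee p x)
        + (\<Sum>j\<in>{..<k}. (Q2 j * (alj j * (x - snd (pw j)))^2 + Q1 j * (alj j * (x - snd (pw j))) + Q0 j)
               * rh (m j) (alj j * (x - snd (pw j))) * ee (pw j) x) = 0) at_top"
    proof (rule always_eventually, rule allI)
      fix x
      have "(\<Sum>j<k. (F2 j * x^2 + F1 j * x + F0 j) * ee (pv j) x + ((\<lambda>_. 0) j * x^2 + G1 j * x + G0 j) * ee (pw j) x)
          = (\<Sum>p\<in>S. (C2 p * x^2 + C1 p * x + C0 p) * ee p x)"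
        unfolding C2_def C1_def C0_def by (rule regroup) (auto simp: S_def)
      thus "(\<Sum>p\<in>S. (C2 p * x^2 + C1 p * x + C0 p) * ee p x)
        + (\<Sum>j\<in>{..<k}. (Q2 j * (alj j * (x - snd (pw j)))^2 + Q1 j * (alj j * (x - snd (pw j))) + Q0 j)
               * rh (m j) (alj j * (x - snd (pw j))) * ee (pw j) x) = 0"
        using allz[of x] Fcomp[of x] by (simp add: lessThan_def)
    qed
  qed
  have abc: "a j = 0 \<and> b j = 0 \<and> c j = 0" if j: "j < k" for j
  proof -
    have q: "Q0 j = 0" "Q1 j = 0" "Q2 j = 0" using GLr j by auto
    have sg: "sig (m j) \<noteq> 0" unfolding sig_def by simp
    have alp: "alj j > 0" unfolding alj_def al_def using vpos[OF j] mnz[OF j] by auto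
    have sv: "sqrt (v j) > 0" using vpos[OF j] by simp
    have "A2 (c j) (v j) = 0" using q(3) sg alp KK_pos unfolding Q2_def by simp
    hence c0: "c j = 0" unfolding A2_def using KK_pos sv vpos[OF j] by simp
    have "A1 (b j) (v j) = 0" using q(2) sg alp KK_pos unfolding Q1_def by simp
    hence b0: "b j = 0" unfolding A1_def using KK_pos sv vpos[OF j] by simp
    have "A0 (a j) (c j) (v j) = 0" using q(1) sg KK_pos unfolding Q0_def by simp
    hence a0: "a j = 0" unfolding A0_def using KK_pos sv vpos[OF j] c0 by simp
    show ?thesis using a0 b0 c0 by simp
  qed
  have dz: "d j = 0" if j: "j < k" for j
  proof -
    have "pw j \<in> S" unfolding S_def using j by auto
    hence "C1 (pw j) = 0" using GLr by auto
    moreover have "C1 (pw j) = G1 j"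
    proof -
      have "C1 (pw j) = (\<Sum>i<k. (if i = j then G1 i else 0))"
        unfolding C1_def
      proof (rule sum.cong[OF refl])
        fix i assume i: "i \<in> {..<k}"
        have "F1 i = 0" unfolding F1_def A1_def A2_def using abc[of i] i by simp
        moreover have "(pw i = pw j) = (i = j)" using inj_on_eq_iff[OF injw, of i j] i j unfolding pw_def by simp
        ultimately show "(if pv i = pw j then F1 i else 0) + (if pw i = pw j then G1 i else 0) = (if i = j then G1 i else 0)"
          by simp
      qed
      also have "\<dots> = G1 j" using j by simp
      finally show ?thesis .
    qed
    ultimately have "G1 j = 0" by simp
    hence "KK^2 * (2 * d j / v j) = 0" unfolding G1_def B1_def using abc[OF j] by simp
    thus ?thesis using KK_pos vpos[OF j] by simp
  qed
  show ?thesis using abc dz by blast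
qed



lemma dsn_m_ee: "v > 0 \<Longrightarrow> v * dsn_m x \<theta> v m = 2 * (x - \<theta>) * KK^2 * ee (v / (1 + m^2), \<theta>) x"
proof -
  assume v: "v > 0"
  have PQ: "std_normal_density ((x - \<theta>) / sqrt v) * std_normal_density (m * (x - \<theta>) / sqrt v) = KK^2 * ee (v / (1 + m^2), \<theta>) x"
    using L2[OF v] unfolding KK_def by simp
  have "v * dsn_m x \<theta> v m = (v / (sqrt v * sqrt v)) * 2 * (x - \<theta>) *
     (std_normal_density ((x - \<theta>) / sqrt v) * std_normal_density (m * (x - \<theta>) / sqrt v))"
    unfolding dsn_m_eq[OF v] by (simp add: field_simps)
  also have "v / (sqrt v * sqrt v) = 1" using v by simp
  finally show ?thesis unfolding PQ by simp
qed

lemma sum_single: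
  fixes j k :: nat
  assumes "j < k" "\<And>i. i < k \<Longrightarrow> i \<noteq> j \<Longrightarrow> f i = (0::real)"
  shows "(\<Sum>i<k. f i) = f j"
proof -
  have "(\<Sum>i<k. f i) = (\<Sum>i<k. if i = j then f j else 0)"
    by (rule sum.cong[OF refl]) (use assms in auto)
  also have "\<dots> = f j" using assms(1) by (subst sum.delta) auto
  finally show ?thesis .
qed

lemma dep_P1:
  fixes k :: nat and \<theta> v m :: "nat \<Rightarrow> real"
  assumes j: "j < k" and mj: "m j = 0" and vj: "v j > 0"
  shows "\<exists>a b c d :: nat \<Rightarrow> real.
            (\<exists>j<k. a j \<noteq> 0 \<or> b j \<noteq> 0 \<or> c j \<noteq> 0 \<or> d j \<noteq> 0) \<and>
            (AE x in lborel. (\<Sum>j<k. a j * skew_normal x (\<theta> j) (v j) (m j)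
                                  + b j * dsn_theta x (\<theta> j) (v j) (m j)
                                  + c j * dsn_v x (\<theta> j) (v j) (m j)
                                  + d j * dsn_m x (\<theta> j) (v j) (m j)) = 0)"
proof -
  define b where "b i = (if i = j then std_normal_density 0 else 0)" for i
  define d where "d i = (if i = j then - std_normal_cdf 0 * sqrt (v j) / v j else 0)" for i
  have nz: "\<exists>j<k. (\<lambda>_. 0::real) j \<noteq> 0 \<or> b j \<noteq> 0 \<or> (\<lambda>_. 0::real) j \<noteq> 0 \<or> d j \<noteq> 0"
    using j phi_pos[of 0] unfolding b_def by auto
  have z: "(\<Sum>i<k. 0 * skew_normal x (\<theta> i) (v i) (m i) + b i * dsn_theta x (\<theta> i) (v i) (m i)
          + 0 * dsn_v x (\<theta> i) (v i) (m i) + d i * dsn_m x (\<theta> i) (v i) (m i)) = 0" for x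
  proof -
    have "(\<Sum>i<k. 0 * skew_normal x (\<theta> i) (v i) (m i) + b i * dsn_theta x (\<theta> i) (v i) (m i)
          + 0 * dsn_v x (\<theta> i) (v i) (m i) + d i * dsn_m x (\<theta> i) (v i) (m i))
        = b j * dsn_theta x (\<theta> j) (v j) (m j) + d j * dsn_m x (\<theta> j) (v j) (m j)"
      by (subst sum_single[OF j]) (auto simp: b_def d_def)
    also have "\<dots> = 0"
    proof -
      define s where "s = sqrt (v j)"
      have s: "s > 0" using vj by (simp add: s_def)
      have vs: "v j = s^2" using vj by (simp add: s_def)
      show ?thesis
        unfolding dsn_theta_eq[OF vj] dsn_m_eq[OF vj] b_def d_def mj s_def[symmetric]
        unfolding vs using s by (simp add: field_simps power2_eq_square)
    qed
    finally show ?thesis .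
  qed
  show ?thesis
    by (rule exI[of _ "\<lambda>_. 0"], rule exI[of _ b], rule exI[of _ "\<lambda>_. 0"], rule exI[of _ d])
       (use nz z in simp)
qed

lemma dep_P2:
  fixes k :: nat and \<theta> v m :: "nat \<Rightarrow> real"
  assumes i: "i < k" and j: "j < k" and ij: "i \<noteq> j" and th: "\<theta> i = \<theta> j"
    and vv: "v i * (1 + (m j)^2) = v j * (1 + (m i)^2)" and vi: "v i > 0" and vj: "v j > 0"
  shows "\<exists>a b c d :: nat \<Rightarrow> real.
            (\<exists>j<k. a j \<noteq> 0 \<or> b j \<noteq> 0 \<or> c j \<noteq> 0 \<or> d j \<noteq> 0) \<and>
            (AE x in lborel. (\<Sum>j<k. a j * skew_normal x (\<theta> j) (v j) (m j)
                                  + b j * dsn_theta x (\<theta> j) (v j) (m j)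
                                  + c j * dsn_v x (\<theta> j) (v j) (m j)
                                  + d j * dsn_m x (\<theta> j) (v j) (m j)) = 0)"
proof -
  define d where "d l = (if l = i then v i else if l = j then - v j else 0)" for l
  have nz: "\<exists>j<k. (\<lambda>_. 0::real) j \<noteq> 0 \<or> (\<lambda>_. 0::real) j \<noteq> 0 \<or> (\<lambda>_. 0::real) j \<noteq> 0 \<or> d j \<noteq> 0"
    using i vi unfolding d_def by (intro exI[of _ i]) auto
  have w: "v i / (1 + (m i)^2) = v j / (1 + (m j)^2)"
    using vv add_pos_nonneg[of 1 "(m i)^2"] add_pos_nonneg[of 1 "(m j)^2"]
    by (simp add: field_simps)
  have z: "(\<Sum>l<k. 0 * skew_normal x (\<theta> l) (v l) (m l) + 0 * dsn_theta x (\<theta> l) (v l) (m l)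
          + 0 * dsn_v x (\<theta> l) (v l) (m l) + d l * dsn_m x (\<theta> l) (v l) (m l)) = 0" for x
  proof -
    have "(\<Sum>l<k. 0 * skew_normal x (\<theta> l) (v l) (m l) + 0 * dsn_theta x (\<theta> l) (v l) (m l)
          + 0 * dsn_v x (\<theta> l) (v l) (m l) + d l * dsn_m x (\<theta> l) (v l) (m l))
        = (\<Sum>l<k. (if l = i then v i * dsn_m x (\<theta> i) (v i) (m i) else 0)
                 + (if l = j then - (v j * dsn_m x (\<theta> j) (v j) (m j)) else 0))"
      by (rule sum.cong[OF refl]) (use ij in \<open>auto simp: d_def\<close>)
    also have "\<dots> = v i * dsn_m x (\<theta> i) (v i) (m i) - v j * dsn_m x (\<theta> j) (v j) (m j)"
      using i j by (simp add: sum.distrib)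
    also have "\<dots> = 0" unfolding dsn_m_ee[OF vi] dsn_m_ee[OF vj] th w by simp
    finally show ?thesis .
  qed
  show ?thesis
    by (rule exI[of _ "\<lambda>_. 0"], rule exI[of _ "\<lambda>_. 0"], rule exI[of _ "\<lambda>_. 0"], rule exI[of _ d])
       (use nz z in simp)
qed



theorem lemma4p1:
  fixes k :: nat and \<theta> v m :: "nat \<Rightarrow> real"
  assumes distinct: "inj_on (\<lambda>j. (\<theta> j, v j, m j)) {..<k}"
    and vpos: "\<And>j. j < k \<Longrightarrow> v j > 0"
  shows "(\<exists>a b c d :: nat \<Rightarrow> real.
            (\<exists>j<k. a j \<noteq> 0 \<or> b j \<noteq> 0 \<or> c j \<noteq> 0 \<or> d j \<noteq> 0) \<and>
            (AE x in lborel. (\<Sum>j<k. a j * skew_normal x (\<theta> j) (v j) (m j)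
                                  + b j * dsn_theta x (\<theta> j) (v j) (m j)
                                  + c j * dsn_v x (\<theta> j) (v j) (m j)
                                  + d j * dsn_m x (\<theta> j) (v j) (m j)) = 0))
         \<longleftrightarrow>
         ((\<Prod>j<k. m j) = 0 \<or>
          (\<Prod>(i, j) \<in> {(i, j). i < k \<and> j < k \<and> i \<noteq> j}.
             (\<theta> i - \<theta> j)\<^sup>2 + (v i * (1 + (m j)\<^sup>2) - v j * (1 + (m i)\<^sup>2))\<^sup>2) = 0)"
  (is "?L \<longleftrightarrow> ?P1 \<or> ?P2")
proof -
  define PS where "PS = {(i, j). i < k \<and> j < k \<and> i \<noteq> j}"
  have finPS: "finite PS" unfolding PS_def
    by (rule finite_subset[of _ "{..<k} \<times> {..<k}"]) auto
  have P2iff: "?P2 \<longleftrightarrow> (\<exists>i j. i < k \<and> j < k \<and> i \<noteq> j \<and> \<theta> i = \<theta> j \<and> v i * (1 + (m j)\<^sup>2) = v j * (1 + (m i)\<^sup>2))"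
  proof -
    have "?P2 \<longleftrightarrow> (\<exists>p\<in>PS. (case p of (i, j) \<Rightarrow> (\<theta> i - \<theta> j)\<^sup>2 + (v i * (1 + (m j)\<^sup>2) - v j * (1 + (m i)\<^sup>2))\<^sup>2) = 0)"
      unfolding PS_def[symmetric] using finPS by (rule prod_zero_iff)
    also have "\<dots> \<longleftrightarrow> (\<exists>i j. i < k \<and> j < k \<and> i \<noteq> j \<and> \<theta> i = \<theta> j \<and> v i * (1 + (m j)\<^sup>2) = v j * (1 + (m i)\<^sup>2))"
      unfolding PS_def by (auto simp: sum_power2_eq_zero_iff)
    finally show ?thesis .
  qed
  have P1iff: "?P1 \<longleftrightarrow> (\<exists>j<k. m j = 0)" by (simp add: prod_zero_iff lessThan_iff Bex_def)
  show ?thesis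
  proof
    assume L: ?L
    show "?P1 \<or> ?P2"
    proof (rule ccontr)
      assume "\<not> (?P1 \<or> ?P2)"
      hence mnz: "\<And>j. j < k \<Longrightarrow> m j \<noteq> 0"
        and np2: "\<And>i j. i < k \<Longrightarrow> j < k \<Longrightarrow> i \<noteq> j \<Longrightarrow> \<theta> i = \<theta> j \<Longrightarrow> v i * (1 + (m j)\<^sup>2) \<noteq> v j * (1 + (m i)\<^sup>2)"
        unfolding P1iff P2iff by auto
      have injw: "inj_on (\<lambda>j. (v j / (1 + (m j)^2), \<theta> j)) {..<k}"
      proof (rule inj_onI)
        fix i j assume i: "i \<in> {..<k}" and j: "j \<in> {..<k}"
          and eq: "(v i / (1 + (m i)^2), \<theta> i) = (v j / (1 + (m j)^2), \<theta> j)"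
        show "i = j"
        proof (rule ccontr)
          assume ij: "i \<noteq> j"
          have "v i / (1 + (m i)^2) = v j / (1 + (m j)^2)" "\<theta> i = \<theta> j" using eq by auto
          hence "v i * (1 + (m j)\<^sup>2) = v j * (1 + (m i)\<^sup>2)"
            using add_pos_nonneg[of 1 "(m i)^2"] add_pos_nonneg[of 1 "(m j)^2"]
            by (simp add: field_simps)
          thus False using np2[of i j] i j ij \<open>\<theta> i = \<theta> j\<close> by auto
        qed
      qed
      from L obtain a b c d :: "nat \<Rightarrow> real" where
        nz: "\<exists>j<k. a j \<noteq> 0 \<or> b j \<noteq> 0 \<or> c j \<noteq> 0 \<or> d j \<noteq> 0" and
        ae: "AE x in lborel. (\<Sum>j<k. a j * skew_normal x (\<theta> j) (v j) (m j)
                                  + b j * dsn_theta x (\<theta> j) (v j) (m j)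
                                  + c j * dsn_v x (\<theta> j) (v j) (m j)
                                  + d j * dsn_m x (\<theta> j) (v j) (m j)) = 0"
        by blast
      have "\<forall>j<k. a j = 0 \<and> b j = 0 \<and> c j = 0 \<and> d j = 0"
        by (rule indep[OF vpos mnz injw ae])
      thus False using nz by blast
    qed
  next
    assume "?P1 \<or> ?P2"
    thus ?L
    proof
      assume ?P1
      then obtain j where j: "j < k" "m j = 0" unfolding P1iff by blast
      show ?L by (rule dep_P1[where j=j and k=k and m=m and v=v and \<theta>=\<theta>, OF j vpos[OF j(1)]])
    next
      assume ?P2
      then obtain i j where h: "i < k" "j < k" "i \<noteq> j" "\<theta> i = \<theta> j" "v i * (1 + (m j)\<^sup>2) = v j * (1 + (m i)\<^sup>2)"
        unfolding P2iff by blast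
      show ?L by (rule dep_P2[where i=i and j=j and k=k and m=m and v=v and \<theta>=\<theta>, OF h vpos[OF h(1)] vpos[OF h(2)]])
    qed
  qed
qed

end
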